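(* Let $\mathbb{X},\mathbb{Y}$ be finite-dimensional real Hilbert spaces, $f:\mathbb{X}\to(-\infty,\infty]$ and $g:\mathbb{Y}\to(-\infty,\infty]$ proper, convex and lower semicontinuous, $K:\mathbb{X}\to\mathbb{Y}$ linear, and $h:\mathbb{X}\to\mathbb{R}$ convex and differentiable with $\bar L$-Lipschitz gradient. Assume (A1) below holds. Let $\{(z_n,x_n,w_n,y_n,\tau_n)\}$ be generated by the P-GRPDA algorithm described in the context, let $(\bar x,\bar w,\bar y)\in\mathbf{\Omega}$, and for $N\ge1$ let $\tilde x_N=\frac1N\sum_{n=1}^N x_n$, $\tilde w_N=\frac1N\sum_{n=1}^N w_n$. Let $b$ be a positive constant with $b\ge2\|\bar y\|$. Then there exist a natural number $n_2$ and a constant $P_1>0$ such that for all $N\ge1$, $$|\Phi(\tilde x_N,\tilde w_N)-\Phi(\bar x,\bar w)|\le\frac{P_1}{N}\quad\text{and}\quad\|K\tilde x_N-\tilde w_N\|\le\frac{2P_1}{bN}.$$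
   Context: $\phi=\frac{1+\sqrt5}{2}$; $K^*$ adjoint of $K$; $g^*$ Fenchel conjugate of $g$; $\operatorname{prox}_{\lambda f}(x)=\arg\min_{u}\{f(u)+\frac{1}{2\lambda}\|u-x\|^2\}$. (A1): the saddle point problem $\min_{x}\max_{y}f(x)+h(x)+\langle Kx,y\rangle-g^*(y)$ has a nonempty solution set, and $0\in\operatorname{ri}(K(\operatorname{dom}f)-\operatorname{dom}g)$ (ri = relative interior). (The paper also assumes the proximal maps of $f,g$ are efficiently computable.) $\Phi(x,w):=f(x)+h(x)+g(w)$; $\mathbf{\Omega}:=\{(\bar x,\bar w,\bar y)\in\mathbb{X}\times\mathbb{Y}\times\mathbb{Y}: -K^*\bar y\in\partial f(\bar x)+\nabla h(\bar x),\ \bar y\in\partial g(\bar w),\ K\bar x=\bar w\}$. P-GRPDA: choose $x_0\in\mathbb{X}$, $y_0\in\mathbb{Y}$, set $z_0=x_0$, choose $\beta>0$, $\psi\in(1,\phi]$, $0<2\mu'<\mu<\psi/2$, $\tau_0>0$. For $n=1,2,\dots$: $z_n=\frac{\psi-1}{\psi}x_{n-1}+\frac1\psi z_{n-1}$; $x_n=\operatorname{prox}_{\tau_{n-1}f}\big(z_n-\tau_{n-1}K^*y_{n-1}-\tau_{n-1}\nabla h(x_{n-1})\big)$; $\tau_n=\min\left\{\tau_{n-1},\ \frac{\mu\|x_n-x_{n-1}\|}{\sqrt\beta\|Kx_n-Kx_{n-1}\|},\ \frac{\mu'\|x_n-x_{n-1}\|}{\|\nabla h(x_n)-\nabla h(x_{n-1})\|}\right\}$,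 $\sigma_n=\beta\tau_n$; $w_n=\operatorname{prox}_{\frac{1}{\sigma_n}g}\big(\frac{y_{n-1}}{\sigma_n}+Kx_n\big)$; $y_n=y_{n-1}+\sigma_n(Kx_n-w_n)$. Conventions in the $\tau_n$ update: $1/0=\infty$ (a term with zero denominator and nonzero numerator is ignored) and $0/0=\infty$ (so $\tau_n=\tau_{n-1}$ if $x_n=x_{n-1}$). *)

theory Defs
  imports "HOL-Analysis.Analysis"
begin

definition edom :: "('a \<Rightarrow> ereal) \<Rightarrow> 'a set" where
  "edom f = {x. f x < \<infinity>}"

definition proper_fun :: "('a \<Rightarrow> ereal) \<Rightarrow> bool" where
  "proper_fun f \<longleftrightarrow> (\<forall>x. f x \<noteq> -\<infinity>) \<and> (\<exists>x. f x \<noteq> \<infinity>)"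

definition convex_efun :: "('a::real_vector \<Rightarrow> ereal) \<Rightarrow> bool" where
  "convex_efun f \<longleftrightarrow> convex {(x, r::real). f x \<le> ereal r}"

definition lsc_efun :: "('a::topological_space \<Rightarrow> ereal) \<Rightarrow> bool" where
  "lsc_efun f \<longleftrightarrow> closed {(x, r::real). f x \<le> ereal r}"

definition fconj :: "('a::real_inner \<Rightarrow> ereal) \<Rightarrow> 'a \<Rightarrow> ereal" where
  "fconj g y = (SUP w. ereal (inner y w) - g w)"

text \<open>Convex subdifferential (empty outside the domain for proper f).\<close>
definition subdiff :: "('a::real_inner \<Rightarrow> ereal) \<Rightarrow> 'a \<Rightarrow> 'a set" where
  "subdiff f x = {v. \<forall>u. f x + ereal (inner v (u - x)) \<le> f u}"

definition prox :: "real \<Rightarrow> ('a::real_normed_vector \<Rightarrow> ereal) \<Rightarrow> 'a \<Rightarrow> 'a" where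
  "prox lam f x = (SOME u. \<forall>v. f u + ereal (norm (u - x) ^ 2 / (2 * lam))
                                 \<le> f v + ereal (norm (v - x) ^ 2 / (2 * lam)))"

text \<open>Saddle point of the Lagrangian f(x) + h(x) + <Kx,y> - g*(y).
  Outside dom f the Lagrangian is +inf and outside dom g* it is -inf, so the
  saddle inequalities only need checking on dom f x dom g*.\<close>
definition saddle_point ::
  "('a::real_inner \<Rightarrow> ereal) \<Rightarrow> ('a \<Rightarrow> real) \<Rightarrow> ('a \<Rightarrow> 'b::real_inner) \<Rightarrow> ('b \<Rightarrow> ereal)
    \<Rightarrow> 'a \<Rightarrow> 'b \<Rightarrow> bool" where
  "saddle_point f h K g xs ys \<longleftrightarrow>
     xs \<in> edom f \<and> ys \<in> edom (fconj g) \<and> fconj g ys \<noteq> -\<infinity> \<and>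
     (let L = (\<lambda>x y. real_of_ereal (f x) + h x + inner (K x) y - real_of_ereal (fconj g y))
      in \<forall>x\<in>edom f. \<forall>y\<in>edom (fconj g). L xs y \<le> L xs ys \<and> L xs ys \<le> L x ys)"

definition assumption_A1 ::
  "('a::euclidean_space \<Rightarrow> ereal) \<Rightarrow> ('a \<Rightarrow> real) \<Rightarrow> ('a \<Rightarrow> 'b::euclidean_space) \<Rightarrow> ('b \<Rightarrow> ereal)
    \<Rightarrow> bool" where
  "assumption_A1 f h K g \<longleftrightarrow>
     (\<exists>xs ys. saddle_point f h K g xs ys) \<and>
     (0::'b) \<in> rel_interior {K x - w | x w. x \<in> edom f \<and> w \<in> edom g}"

definition Omega_set ::
  "('a::real_inner \<Rightarrow> ereal) \<Rightarrow> ('a \<Rightarrow> 'a) \<Rightarrow> ('a \<Rightarrow> 'b::real_inner) \<Rightarrow> ('b \<Rightarrow> ereal)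
    \<Rightarrow> ('a \<times> 'b \<times> 'b) set" where
  "Omega_set f gradh K g = {(xb, wb, yb).
      - adjoint K yb - gradh xb \<in> subdiff f xb \<and> yb \<in> subdiff g wb \<and> K xb = wb}"

text \<open>Step-size candidate with the conventions 1/0 = 0/0 = infinity: a term whose
  denominator vanishes is ignored (replaced by the previous step size).\<close>
definition step_term :: "real \<Rightarrow> real \<Rightarrow> real \<Rightarrow> real" where
  "step_term prev num den = (if den = 0 then prev else num / den)"

definition golden_ratio :: real where
  "golden_ratio = (1 + sqrt 5) / 2"

end

theory Submission
  imports Defs
begin


lemma h_tangent:
  fixes h :: "'a::euclidean_space \<Rightarrow> real"
  assumes cv: "convex_on UNIV h"
    and d: "(h has_derivative (\<lambda>d. inner gr d)) (at x)"
  shows "h y \<ge> h x + inner gr (y - x)"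
proof -
  define \<phi> where "\<phi> = (\<lambda>t::real. h (x + t *\<^sub>R (y - x)))"
  have c1: "convex_on UNIV \<phi>"
  proof (rule convex_onI)
    fix t a b :: real assume ab: "0 < t" "t < 1"
    have "x + ((1 - t) * a + t * b) *\<^sub>R (y - x) = (1 - t) *\<^sub>R (x + a *\<^sub>R (y - x)) + t *\<^sub>R (x + b *\<^sub>R (y - x))"
      by (simp add: algebra_simps)
    then show "\<phi> ((1 - t) *\<^sub>R a + t *\<^sub>R b) \<le> (1 - t) * \<phi> a + t * \<phi> b"
      unfolding \<phi>_def using convex_onD[OF cv, of t] ab by simp
  qed simp
  have dl: "((\<lambda>t::real. x + t *\<^sub>R (y - x)) has_derivative (\<lambda>t. t *\<^sub>R (y - x))) (at 0)"
    by (auto intro!: derivative_eq_intros)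
  have "((\<lambda>t. h (x + t *\<^sub>R (y - x))) has_derivative (\<lambda>t. inner gr (t *\<^sub>R (y - x)))) (at 0)"
    using has_derivative_compose[OF dl, of h "\<lambda>d. inner gr d"] d by simp
  then have "(\<phi> has_field_derivative (inner gr (y - x))) (at 0 within UNIV)"
  proof -
    have e: "(\<lambda>t. inner gr (t *\<^sub>R (y - x))) = (*) (inner gr (y - x))"
      by (rule ext) simp
    show ?thesis using \<open>((\<lambda>t. h (x + t *\<^sub>R (y - x))) has_derivative _) _\<close>
      unfolding has_field_derivative_def \<phi>_def e by simp
  qed
  from convex_on_imp_above_tangent[OF c1 connected_UNIV _ _ this, of 1]
  have "\<phi> 1 - \<phi> 0 \<ge> inner gr (y - x)" by simp
  then show ?thesis unfolding \<phi>_def by simp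
qed



lemma ns: fixes a b :: "'a::real_inner"
  shows "norm (a + t *\<^sub>R b)^2 = norm a^2 + 2*t*inner a b + t^2 * norm b^2"
  unfolding power2_norm_eq_inner
  by (simp add: inner_add_left inner_add_right inner_commute algebra_simps power2_eq_square)
lemma nd: fixes a b c :: "'a::real_inner"
  shows "2 * inner (a - b) (b - c) = norm (a - c)^2 - norm (a - b)^2 - norm (b - c)^2"
  unfolding power2_norm_eq_inner
  by (simp add: inner_diff_left inner_diff_right inner_commute algebra_simps)
lemma ncvx: fixes a b :: "'a::real_inner"
  shows "norm (al *\<^sub>R a + (1 - al) *\<^sub>R b)^2 = al * norm a^2 + (1 - al) * norm b^2 - al * (1 - al) * norm (a - b)^2"
  unfolding power2_norm_eq_inner
  by (simp add: inner_diff_left inner_diff_right inner_add_left inner_add_right inner_commute algebra_simps)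

lemma p2_alg:
  fixes a b c d p \<psi> :: real
  assumes "\<psi> > 1" "b = ((\<psi>-1)/\<psi>)*d + (1 - (\<psi>-1)/\<psi>)*a - ((\<psi>-1)/\<psi>)*(1-(\<psi>-1)/\<psi>)*c" "p = a - c - d"
  shows "p = \<psi>/(\<psi>-1)*(a-b) - (1+1/\<psi>)*c"
proof -
  define uu where "uu = 1/\<psi>"
  define vv where "vv = 1/(\<psi>-1)"
  have uv: "\<psi> * uu = 1" "(\<psi>-1) * vv = 1" using assms(1) unfolding uu_def vv_def by auto
  have e1: "(\<psi>-1)/\<psi> = 1 - uu" unfolding uu_def using assms(1) by (simp add: field_simps)
  have e2: "\<psi>/(\<psi>-1) = \<psi> * vv" "1/\<psi> = uu" unfolding uu_def vv_def by auto
  have b: "b = (1-uu)*d + uu*a - (1-uu)*uu*c" using assms(2) unfolding e1 by simp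
  show ?thesis unfolding e2 using b assms(3) uv by algebra
qed

lemma efun_convex_ineq:
  fixes F :: "'a::real_vector \<Rightarrow> ereal"
  assumes cv: "convex_efun F" and fa: "F a = ereal ra" and fb: "F b = ereal rb"
    and t: "0 \<le> t" "t \<le> 1"
  shows "F ((1 - t) *\<^sub>R a + t *\<^sub>R b) \<le> ereal ((1 - t) * ra + t * rb)"
proof -
  let ?E = "{(x, r::real). F x \<le> ereal r}"
  have "(a, ra) \<in> ?E" "(b, rb) \<in> ?E" using fa fb by auto
  then have "(1 - t) *\<^sub>R (a, ra) + t *\<^sub>R (b, rb) \<in> ?E"
    using cv t unfolding convex_efun_def by (intro convexD) auto
  then show ?thesis by simp
qed

lemma affine_minorant:
  fixes F :: "'a::euclidean_space \<Rightarrow> ereal"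
  assumes pr: "proper_fun F" and cv: "convex_efun F" and ls: "lsc_efun F"
  shows "\<exists>a c. \<forall>u. ereal (inner a u + c) \<le> F u"
proof -
  let ?E = "{(x, r::real). F x \<le> ereal r}"
  obtain u0 where u0: "F u0 \<noteq> \<infinity>" using pr unfolding proper_fun_def by auto
  moreover have "F u0 \<noteq> -\<infinity>" using pr unfolding proper_fun_def by auto
  ultimately obtain r0 where r0: "F u0 = ereal r0" by (cases "F u0") auto
  have nin: "(u0, r0 - 1) \<notin> ?E" using r0 by auto
  obtain as b where sep: "inner as (u0, r0 - 1) < b" "\<forall>p\<in>?E. inner as p > b"
    using separating_hyperplane_closed_point[OF cv[unfolded convex_efun_def]
        ls[unfolded lsc_efun_def] nin] by blast
  obtain a s where as: "as = (a, s)" by (cases as)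
  have "(u0, r0) \<in> ?E" using r0 by auto
  then have "inner a u0 + s * r0 > b" using sep(2) as by auto
  moreover have "inner a u0 + s * (r0 - 1) < b" using sep(1) as by simp
  ultimately have s0: "s > 0" by (simp add: algebra_simps)
  show ?thesis
  proof (intro exI allI)
    fix u
    show "ereal (inner (- (1/s) *\<^sub>R a) u + b / s) \<le> F u"
    proof (cases "F u")
      case (real r)
      then have "(u, r) \<in> ?E" by auto
      then have "inner a u + s * r > b" using sep(2) as by auto
      then have "b / s - inner a u / s < r" using s0 by (simp add: field_simps)
      then show ?thesis using real by simp
    next
      case PInf then show ?thesis by simp
    next
      case MInf then show ?thesis using pr unfolding proper_fun_def by auto
    qed
  qed
qed

lemma quad_bound:
  fixes t al be :: real
  assumes "t \<ge> 0" "al \<ge> 0" "be \<ge> 0" "t^2 \<le> al * t + be"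
  shows "t \<le> 1 + al + be"
proof (cases "t \<ge> 1")
  case True
  then have "t * t \<le> al * t + be * t" using assms mult_left_mono[of 1 t be] by (simp add: power2_eq_square)
  then have "t \<le> al + be" using True by (smt (verit) distrib_right mult_le_cancel_right_pos)
  then show ?thesis by simp
qed (use assms in auto)

lemma prox_exists:
  fixes F :: "'a::euclidean_space \<Rightarrow> ereal"
  assumes pr: "proper_fun F" and cv: "convex_efun F" and ls: "lsc_efun F" and lam: "lam > 0"
  shows "\<exists>u. \<forall>v. F u + ereal (norm (u - x) ^ 2 / (2 * lam)) \<le> F v + ereal (norm (v - x) ^ 2 / (2 * lam))"
proof -
  define q where "q = (\<lambda>u. norm (u - x) ^ 2 / (2 * lam))"
  obtain a c where ac: "\<And>u. ereal (inner a u + c) \<le> F u" using affine_minorant[OF assms(1-3)] by blast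
  obtain u0 where u0: "F u0 \<noteq> \<infinity>" using pr unfolding proper_fun_def by auto
  moreover have "F u0 \<noteq> -\<infinity>" using pr unfolding proper_fun_def by auto
  ultimately obtain r0 where r0: "F u0 = ereal r0" by (cases "F u0") auto
  define r1 where "r1 = r0 + q u0"
  define S where "S = {(u, r::real). F u \<le> ereal r} \<inter> {p. snd p + q (fst p) \<le> r1}"
  have cq: "continuous_on UNIV q" unfolding q_def using lam by (intro continuous_intros) auto
  have "closed {p::'a\<times>real. snd p + q (fst p) \<le> r1}"
    by (intro closed_Collect_le continuous_intros continuous_on_compose2[OF cq]) auto
  then have clS: "closed S" unfolding S_def using ls[unfolded lsc_efun_def] by blast
  have bnd: "norm (u - x) \<le> 1 + 2 * lam * norm a + 2 * lam * \<bar>r1 - c\<bar> + 2 * lam * norm a * norm x"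
    if "(u, r) \<in> S" for u r
  proof -
    from that have "F u \<le> ereal r" "r + q u \<le> r1" unfolding S_def by auto
    with ac[of u] have "inner a u + c \<le> r" by (meson ereal_less_eq(3) order_trans)
    with \<open>r + q u \<le> r1\<close> have "q u \<le> r1 - c - inner a u" by linarith
    moreover have "- inner a u \<le> norm a * norm u" using Cauchy_Schwarz_ineq2[of a u] by linarith
    moreover have "norm u \<le> norm (u - x) + norm x" by (metis norm_triangle_sub add.commute)
    moreover have "norm a * norm u \<le> norm a * (norm (u - x) + norm x)"
      using calculation(3) by (simp add: mult_left_mono)
    ultimately have "q u \<le> \<bar>r1 - c\<bar> + norm a * (norm (u - x) + norm x)" by linarith
    then have "norm (u - x) ^ 2 \<le> (2 * lam * norm a) * norm (u - x) + 2 * lam * (\<bar>r1 - c\<bar> + norm a * norm x)"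
      unfolding q_def using lam by (simp add: field_simps)
    from quad_bound[OF _ _ _ this] lam show ?thesis by (simp add: algebra_simps)
  qed
  define B where "B = 1 + 2 * lam * norm a + 2 * lam * \<bar>r1 - c\<bar> + 2 * lam * norm a * norm x"
  have "bounded S"
    unfolding bounded_iff
  proof (intro exI ballI)
    fix p assume p: "p \<in> S"
    obtain u r where ur: "p = (u, r)" by (cases p)
    have nu: "norm u \<le> B + norm x" using bnd[of u r] p ur unfolding B_def
      by (smt (verit) norm_triangle_sub)
    from p ur have "F u \<le> ereal r" "r + q u \<le> r1" unfolding S_def by auto
    with ac[of u] have "inner a u + c \<le> r" by (meson ereal_less_eq(3) order_trans)
    moreover have "q u \<ge> 0" unfolding q_def using lam by simp
    ultimately have "\<bar>r\<bar> \<le> \<bar>r1\<bar> + \<bar>c\<bar> + norm a * norm u"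
      using \<open>r + q u \<le> r1\<close> norm_cauchy_schwarz[of a u] Cauchy_Schwarz_ineq2[of a u] by linarith
    also have "\<dots> \<le> \<bar>r1\<bar> + \<bar>c\<bar> + norm a * (B + norm x)" using nu by (simp add: mult_left_mono)
    finally have "norm p \<le> (B + norm x) + (\<bar>r1\<bar> + \<bar>c\<bar> + norm a * (B + norm x))"
      using norm_Pair_le[of u r] nu ur by simp
    then show "norm p \<le> (B + norm x) + (\<bar>r1\<bar> + \<bar>c\<bar> + norm a * (B + norm x))" .
  qed
  then have cpS: "compact S" using clS by (simp add: compact_eq_bounded_closed)
  have "(u0, r0) \<in> S" unfolding S_def r1_def using r0 by auto
  then have neS: "S \<noteq> {}" by auto
  have "continuous_on S (\<lambda>p. snd p + q (fst p))"
    by (intro continuous_intros continuous_on_compose2[OF cq]) auto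
  from continuous_attains_inf[OF cpS neS this]
  obtain p where p: "p \<in> S" "\<And>p'. p' \<in> S \<Longrightarrow> snd p + q (fst p) \<le> snd p' + q (fst p')" by blast
  obtain up rp where upr: "p = (up, rp)" by (cases p)
  have Fp: "F up \<le> ereal rp" "rp + q up \<le> r1" using p(1) upr unfolding S_def by auto
  show ?thesis
  proof (intro exI allI)
    fix v
    have "F up + ereal (q up) \<le> F v + ereal (q v)"
    proof (cases "F v")
      case (real rv)
      show ?thesis
      proof (cases "rv + q v \<le> r1")
        case True
        then have "(v, rv) \<in> S" unfolding S_def using real by auto
        then have "rp + q up \<le> rv + q v" using p(2) upr by fastforce
        then show ?thesis using Fp real
          by (metis add_right_mono order_trans plus_ereal.simps(1) ereal_less_eq(3))
      next
        case False
        then show ?thesis using Fp real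
          by (smt (verit) add_right_mono ereal_less_eq(3) order_trans plus_ereal.simps(1))
      qed
    next
      case PInf
      then show ?thesis by simp
    next
      case MInf then show ?thesis using pr unfolding proper_fun_def by auto
    qed
    then show "F up + ereal (norm (up - x) ^ 2 / (2 * lam)) \<le> F v + ereal (norm (v - x) ^ 2 / (2 * lam))"
      unfolding q_def .
  qed
qed



lemma small_t:
  fixes X C :: real
  assumes C: "C \<ge> 0" and h: "\<And>t. 0 < t \<Longrightarrow> t < 1 \<Longrightarrow> X \<le> t * C"
  shows "X \<le> 0"
proof (rule ccontr)
  assume "\<not> X \<le> 0"
  then have X: "X > 0" by simp
  define t where "t = min (1/2) (X / (2 * (C + 1)))"
  have t0: "0 < t" "t < 1" unfolding t_def using X C by auto
  have "t * C \<le> (X / (2 * (C + 1))) * C" unfolding t_def using C by (intro mult_right_mono) auto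
  also have "\<dots> < X" using X C by (simp add: field_simps) (smt (verit) mult_nonneg_nonneg)
  finally show False using h[OF t0] by simp
qed

lemma prox_char:
  fixes F :: "'a::euclidean_space \<Rightarrow> ereal" and x :: 'a
  assumes pr: "proper_fun F" and cv: "convex_efun F" and ls: "lsc_efun F" and lam: "lam > 0"
  defines "p \<equiv> prox lam F x"
  shows "F p = ereal (real_of_ereal (F p))"
    and "\<And>u. F p + ereal (inner ((1/lam) *\<^sub>R (x - p)) (u - p)) \<le> F u"
proof -
  define q where "q = (\<lambda>u. norm (u - x) ^ 2 / (2 * lam))"
  have min: "\<And>v. F p + ereal (q p) \<le> F v + ereal (q v)"
    unfolding p_def prox_def q_def using someI_ex[OF prox_exists[OF pr cv ls lam, of x]] by blast
  obtain u0 where u0: "F u0 \<noteq> \<infinity>" using pr unfolding proper_fun_def by auto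
  have "F p \<noteq> \<infinity>"
  proof
    assume "F p = \<infinity>"
    then have "F u0 + ereal (q u0) = \<infinity>" using min[of u0] by simp
    then show False using u0 by simp
  qed
  moreover have "F p \<noteq> -\<infinity>" using pr unfolding proper_fun_def by auto
  ultimately obtain rp where rp: "F p = ereal rp" by (cases "F p") auto
  then show "F p = ereal (real_of_ereal (F p))" by simp
  fix u
  show "F p + ereal (inner ((1/lam) *\<^sub>R (x - p)) (u - p)) \<le> F u"
  proof (cases "F u")
    case PInf then show ?thesis by simp
  next
    case MInf then show ?thesis using pr unfolding proper_fun_def by auto
  next
    case (real ru)
    have key: "rp - ru - inner (p - x) (u - p) / lam \<le> t * (norm (u - p) ^ 2 / (2 * lam))"
      if t: "0 < t" "t < 1" for t
    proof -
      define ut where "ut = (1 - t) *\<^sub>R p + t *\<^sub>R u"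
      have c: "F ut \<le> ereal ((1 - t) * rp + t * ru)"
        unfolding ut_def using efun_convex_ineq[OF cv rp real, of t] t by simp
      have "ereal (rp + q p) \<le> F ut + ereal (q ut)" using min[of ut] rp by simp
      also have "\<dots> \<le> ereal ((1 - t) * rp + t * ru) + ereal (q ut)" using add_right_mono[OF c, of "ereal (q ut)"] by simp
      finally have m: "rp + q p \<le> (1 - t) * rp + t * ru + q ut" by simp
      have e: "ut - x = (p - x) + t *\<^sub>R (u - p)" unfolding ut_def by (simp add: algebra_simps)
      have "norm (ut - x) ^ 2 = norm (p - x) ^ 2 + 2 * t * inner (p - x) (u - p) + t^2 * norm (u - p) ^ 2"
        unfolding e by (rule ns)
      then have "q ut = q p + (2 * t * inner (p - x) (u - p) + t^2 * norm (u - p) ^ 2) / (2 * lam)"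
        unfolding q_def using lam by (simp add: field_simps)
      with m have "t * rp \<le> t * ru + t * (inner (p - x) (u - p) / lam + t * (norm (u - p) ^ 2 / (2 * lam)))"
        using lam by (simp add: field_simps power2_eq_square)
      then have "rp \<le> ru + (inner (p - x) (u - p) / lam + t * (norm (u - p) ^ 2 / (2 * lam)))"
        using t by (simp add: distrib_left[symmetric])
      then show ?thesis by simp
    qed
    have "rp - ru - inner (p - x) (u - p) / lam \<le> 0"
      by (rule small_t[OF _ key]) (use lam in auto)
    then have "rp + inner ((1/lam) *\<^sub>R (x - p)) (u - p) \<le> ru"
      using lam by (simp add: inner_diff_left divide_simps left_diff_distrib split: if_splits)
    then show ?thesis using rp real by simp
  qed
qed



lemma one_step:
  fixes xp xc xn zc zn xb ghp ghc :: "'a::real_inner"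
    and yp yc yb wc kc kn kb :: "'b::real_inner"
  assumes ha: "Fn - Fb \<le> (1/tc) * inner (zc - xn) (xn - xb) + inner yc (kb - kn) + inner ghc (xb - xn)"
    and hb: "Fc - Fn \<le> (\<psi>/tp) * inner (zc - xc) (xc - xn) + inner yp (kn - kc) + inner ghp (xn - xc)"
    and hg: "Gc - Gb \<le> inner yc (wc - kb)"
    and hh: "Hc - Hb \<le> inner ghc (xc - xb)"
    and hy: "yc = yp + (\<beta> * tc) *\<^sub>R (kc - wc)"
    and hz: "zn = ((\<psi> - 1) / \<psi>) *\<^sub>R xn + (1 / \<psi>) *\<^sub>R zc"
    and hK: "sqrt \<beta> * tn * norm (kc - kn) \<le> \<mu> * norm (xc - xn)"
    and hH: "tc * norm (ghc - ghp) \<le> \<mu>' * norm (xc - xp)"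
    and pos: "tp > 0" "tc > 0" "tn > 0" "tc \<le> tp" "\<beta> > 0" "\<psi> > 1" "\<psi>^2 \<le> \<psi> + 1" "\<mu> \<ge> 0" "\<mu>' \<ge> 0"
  shows "2 * tc * (Fc + Hc + Gc - Fb - Hb - Gb + inner yb (kc - wc))
     \<le> (\<psi> / (\<psi> - 1)) * (norm (zc - xb)^2 - norm (zn - xb)^2)
       + (1/\<beta>) * (norm (yb - yp)^2 - norm (yb - yc)^2)
       + \<mu>' * (norm (xc - xp)^2 - norm (xn - xc)^2)
       + (1/\<beta>) * ((tc/tn) * \<mu> - 1) * norm (yc - yp)^2
       - ((tc/tp) * \<psi> - (tc/tn) * \<mu> - 2 * \<mu>') * norm (xn - xc)^2"
proof -
  define P where "P = inner (zc - xn) (xn - xb)"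
  define Q where "Q = inner (zc - xc) (xc - xn)"
  define R where "R = inner (yb - yc) (yc - yp)"
  define C where "C = inner (yc - yp) (kc - kn)"
  define Hx where "Hx = inner (ghc - ghp) (xc - xn)"
  define \<theta> where "\<theta> = tc / tp"
  define r where "r = tc / tn"
  have kw: "kc - wc = (1 / (\<beta> * tc)) *\<^sub>R (yc - yp)" using hy pos by auto
  have idK: "inner yc (kb - kn) + inner yp (kn - kc) + inner yc (wc - kb) + inner yb (kc - wc)
      = inner (yb - yc) (kc - wc) + C"
    unfolding C_def by (simp add: inner_diff_left inner_diff_right algebra_simps)
  have idK2: "inner (yb - yc) (kc - wc) = R / (\<beta> * tc)" unfolding R_def kw by simp
  have idH: "inner ghc (xb - xn) + inner ghp (xn - xc) + inner ghc (xc - xb) = Hx"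
    unfolding Hx_def by (simp add: inner_diff_left inner_diff_right algebra_simps)
  have S1: "Fc + Hc + Gc - Fb - Hb - Gb + inner yb (kc - wc)
      \<le> (1/tc) * P + (\<psi>/tp) * Q + R / (\<beta> * tc) + C + Hx"
    using ha hb hg hh idK idK2 idH unfolding P_def Q_def by linarith
  have S2: "2 * tc * (Fc + Hc + Gc - Fb - Hb - Gb + inner yb (kc - wc))
      \<le> 2 * P + \<theta> * \<psi> * (2 * Q) + (1/\<beta>) * (2 * R) + 2 * (tc * C) + 2 * (tc * Hx)"
  proof -
    have "2 * tc * (Fc + Hc + Gc - Fb - Hb - Gb + inner yb (kc - wc))
       \<le> 2 * tc * ((1/tc) * P + (\<psi>/tp) * Q + R / (\<beta> * tc) + C + Hx)"
      using S1 pos by (intro mult_left_mono) auto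
    also have "\<dots> = 2 * P + \<theta> * \<psi> * (2 * Q) + (1/\<beta>) * (2 * R) + 2 * (tc * C) + 2 * (tc * Hx)"
      unfolding \<theta>_def using pos by (simp add: field_simps)
    finally show ?thesis .
  qed
  have E1: "2 * P = norm (zc - xb)^2 - norm (zc - xn)^2 - norm (xn - xb)^2"
    unfolding P_def by (rule nd)
  have zeq: "zn - xb = ((\<psi> - 1) / \<psi>) *\<^sub>R (xn - xb) + (1 - (\<psi> - 1) / \<psi>) *\<^sub>R (zc - xb)"
  proof -
    have c1: "1 - (\<psi> - 1) / \<psi> = 1/\<psi>" using pos by (simp add: field_simps)
    have "((\<psi> - 1) / \<psi>) *\<^sub>R xb + (1/\<psi>) *\<^sub>R xb = ((\<psi> - 1) / \<psi> + 1/\<psi>) *\<^sub>R xb"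
      by (simp add: scaleR_add_left)
    also have "(\<psi> - 1) / \<psi> + 1/\<psi> = 1" using pos by (simp add: field_simps)
    finally have xbe: "xb = ((\<psi> - 1) / \<psi>) *\<^sub>R xb + (1/\<psi>) *\<^sub>R xb" by simp
    show ?thesis unfolding c1 hz
      by (subst (1) xbe) (simp add: algebra_simps)
  qed
  have E2: "norm (zn - xb)^2 = ((\<psi> - 1) / \<psi>) * norm (xn - xb)^2 + (1 - (\<psi> - 1) / \<psi>) * norm (zc - xb)^2
       - ((\<psi> - 1) / \<psi>) * (1 - (\<psi> - 1) / \<psi>) * norm ((xn - xb) - (zc - xb))^2"
    unfolding zeq by (rule ncvx)
  have nzx: "norm ((xn - xb) - (zc - xb)) = norm (zc - xn)" by (simp add: norm_minus_commute)
  have P2: "2 * P = (\<psi> / (\<psi> - 1)) * (norm (zc - xb)^2 - norm (zn - xb)^2) - (1 + 1/\<psi>) * norm (zc - xn)^2"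
    using p2_alg[OF pos(6) E2[unfolded nzx] E1] by simp
  have E3: "2 * Q = norm (zc - xn)^2 - norm (zc - xc)^2 - norm (xn - xc)^2"
    unfolding Q_def using nd[of zc xc xn] by (simp add: norm_minus_commute)
  have E4: "2 * R = norm (yb - yp)^2 - norm (yb - yc)^2 - norm (yc - yp)^2"
    unfolding R_def by (rule nd)
  have sb: "sqrt \<beta> > 0" using pos by simp
  have C1: "tc * C \<le> tc * (norm (yc - yp) * norm (kc - kn))"
    unfolding C_def using pos Cauchy_Schwarz_ineq2[of "yc - yp" "kc - kn"] by (intro mult_left_mono) auto
  have tk: "tc * norm (kc - kn) \<le> r * \<mu> * norm (xc - xn) / sqrt \<beta>"
  proof -
    have "tn * norm (kc - kn) \<le> \<mu> * norm (xc - xn) / sqrt \<beta>" using hK sb by (simp add: field_simps)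
    then have "r * (tn * norm (kc - kn)) \<le> r * (\<mu> * norm (xc - xn) / sqrt \<beta>)"
      using pos unfolding r_def by (intro mult_left_mono) auto
    then show ?thesis unfolding r_def using pos by (simp add: field_simps)
  qed
  have C2: "2 * (tc * C) \<le> r * \<mu> * ((1/\<beta>) * norm (yc - yp)^2 + norm (xn - xc)^2)"
  proof -
    define A where "A = norm (yc - yp) / sqrt \<beta>"
    define B where "B = norm (xc - xn)"
    have A2: "A^2 = (1/\<beta>) * norm (yc - yp)^2" unfolding A_def using pos by (simp add: power_divide)
    have B2: "B^2 = norm (xn - xc)^2" unfolding B_def by (simp add: norm_minus_commute)
    have "2 * (tc * C) \<le> 2 * (norm (yc - yp) * (tc * norm (kc - kn)))" using C1 by (simp add: algebra_simps)
    also have "\<dots> \<le> 2 * (norm (yc - yp) * (r * \<mu> * norm (xc - xn) / sqrt \<beta>))"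
      using tk by (intro mult_left_mono) auto
    also have "\<dots> = r * \<mu> * (2 * A * B)" unfolding A_def B_def by (simp add: field_simps)
    also have "\<dots> \<le> r * \<mu> * (A^2 + B^2)"
      using pos unfolding r_def by (intro mult_left_mono) (auto simp: sum_squares_bound)
    finally show ?thesis unfolding A2 B2 .
  qed
  have H2: "2 * (tc * Hx) \<le> \<mu>' * (norm (xc - xp)^2 + norm (xn - xc)^2)"
  proof -
    have "tc * Hx \<le> tc * (norm (ghc - ghp) * norm (xc - xn))"
      unfolding Hx_def using pos Cauchy_Schwarz_ineq2[of "ghc - ghp" "xc - xn"] by (intro mult_left_mono) auto
    also have "\<dots> = (tc * norm (ghc - ghp)) * norm (xc - xn)" by simp
    also have "\<dots> \<le> (\<mu>' * norm (xc - xp)) * norm (xc - xn)" using hH by (intro mult_right_mono) auto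
    finally have "2 * (tc * Hx) \<le> \<mu>' * (2 * norm (xc - xp) * norm (xc - xn))" by simp
    also have "\<dots> \<le> \<mu>' * (norm (xc - xp)^2 + norm (xc - xn)^2)"
      using pos by (intro mult_left_mono) (auto simp: sum_squares_bound)
    finally show ?thesis by (simp add: norm_minus_commute)
  qed
  have th1: "\<theta> \<le> 1" "\<theta> \<ge> 0" unfolding \<theta>_def using pos by auto
  have psi1: "\<psi> \<le> 1 + 1/\<psi>" using pos by (simp add: field_simps power2_eq_square)
  have tp1: "\<theta> * \<psi> \<le> 1 + 1/\<psi>" proof -
    have "\<theta> * \<psi> \<le> 1 * \<psi>" using th1 pos by (intro mult_right_mono) auto
    then show ?thesis using psi1 by linarith
  qed
  have Z1: "\<theta> * \<psi> * norm (zc - xn)^2 \<le> (1 + 1/\<psi>) * norm (zc - xn)^2"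
    using tp1 by (intro mult_right_mono) auto
  have Z2: "\<theta> * \<psi> * norm (zc - xc)^2 \<ge> 0" using th1 pos by simp
  have E3': "\<theta> * \<psi> * (2 * Q) = \<theta> * \<psi> * norm (zc - xn)^2 - \<theta> * \<psi> * norm (zc - xc)^2 - \<theta> * \<psi> * norm (xn - xc)^2"
    unfolding E3 by (simp add: algebra_simps)
  have rhs: "(\<psi> / (\<psi> - 1)) * (norm (zc - xb)^2 - norm (zn - xb)^2)
       + (1/\<beta>) * (norm (yb - yp)^2 - norm (yb - yc)^2)
       + \<mu>' * (norm (xc - xp)^2 - norm (xn - xc)^2)
       + (1/\<beta>) * ((tc/tn) * \<mu> - 1) * norm (yc - yp)^2
       - ((tc/tp) * \<psi> - (tc/tn) * \<mu> - 2 * \<mu>') * norm (xn - xc)^2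
     = (\<psi> / (\<psi> - 1)) * (norm (zc - xb)^2 - norm (zn - xb)^2)
       + (1/\<beta>) * (2 * R) + (1/\<beta>) * norm (yc - yp)^2
       + \<mu>' * (norm (xc - xp)^2 + norm (xn - xc)^2)
       + r * \<mu> * ((1/\<beta>) * norm (yc - yp)^2 + norm (xn - xc)^2)
       - (1/\<beta>) * norm (yc - yp)^2 
       - \<theta> * \<psi> * norm (xn - xc)^2"
    unfolding E4 \<theta>_def r_def by (simp add: algebra_simps)
  show ?thesis unfolding rhs using S2 P2 E3' Z1 Z2 C2 H2 by linarith
qed


lemma efun_jensen:
  fixes F :: "'a::real_vector \<Rightarrow> ereal"
  assumes cv: "convex_efun F" and fin: "finite A" and ne: "A \<noteq> {}"
    and val: "\<And>i. i \<in> A \<Longrightarrow> F (p i) = ereal (c i)"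
  shows "F ((1 / real (card A)) *\<^sub>R (\<Sum>i\<in>A. p i)) \<le> ereal ((1 / real (card A)) * (\<Sum>i\<in>A. c i))"
proof -
  let ?E = "{(x, r::real). F x \<le> ereal r}"
  let ?a = "\<lambda>i::'b. 1 / real (card A)"
  have cA: "real (card A) > 0" using fin ne by (simp add: card_gt_0_iff)
  have "(\<Sum>i\<in>A. ?a i *\<^sub>R (p i, c i)) \<in> ?E"
    using cv[unfolded convex_efun_def] fin cA val
    by (intro convex_sum) auto
  moreover have "(\<Sum>i\<in>A. ?a i *\<^sub>R (p i, c i)) = ((1 / real (card A)) *\<^sub>R (\<Sum>i\<in>A. p i), (1 / real (card A)) * (\<Sum>i\<in>A. c i))"
    by (simp add: fst_sum snd_sum prod_eq_iff scaleR_sum_right sum_distrib_left)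
  ultimately show ?thesis by simp
qed

lemma step_term_ge:
  assumes "prev \<ge> m" "num \<ge> 0" "den \<ge> 0" "den \<noteq> 0 \<Longrightarrow> num / den \<ge> m"
  shows "step_term prev num den \<ge> m"
  using assms unfolding step_term_def by auto

lemma step_term_rule:
  assumes "t \<le> step_term prev num den" "num \<ge> 0" "den \<ge> 0"
  shows "t * den \<le> num"
proof (cases "den = 0")
  case True then show ?thesis using assms by simp
next
  case False
  then have "t \<le> num / den" using assms unfolding step_term_def by simp
  then show ?thesis using False assms by (simp add: field_simps)
qed

lemma prox_step_ineq:
  fixes p u zz a gg :: "'a::real_inner"
  assumes "ereal Fp + ereal (inner ((1/t) *\<^sub>R (zz - t *\<^sub>R a - t *\<^sub>R gg - p)) (u - p)) \<le> ereal Fu"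
    and t: "t > 0"
  shows "Fp - Fu \<le> (1/t) * inner (zz - p) (p - u) + inner a (u - p) + inner gg (u - p)"
proof -
  have "Fp + inner ((1/t) *\<^sub>R (zz - t *\<^sub>R a - t *\<^sub>R gg - p)) (u - p) \<le> Fu" using assms(1) by simp
  moreover have "inner ((1/t) *\<^sub>R (zz - t *\<^sub>R a - t *\<^sub>R gg - p)) (u - p)
      = (1/t) * inner (zz - p) (u - p) - inner a (u - p) - inner gg (u - p)"
    using t by (simp add: inner_diff_left inner_diff_right algebra_simps)
  moreover have "inner (zz - p) (p - u) = - inner (zz - p) (u - p)"
    by (simp add: inner_diff_right)
  ultimately show ?thesis by (simp add: algebra_simps)
qed

theorem theorem4p1:
  fixes f :: "'x::euclidean_space \<Rightarrow> ereal"
    and g :: "'y::euclidean_space \<Rightarrow> ereal"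
    and K :: "'x \<Rightarrow> 'y"
    and h :: "'x \<Rightarrow> real" and gradh :: "'x \<Rightarrow> 'x" and L :: real
    and \<beta> \<psi> \<mu> \<mu>' \<tau>0 b :: real
    and z x :: "nat \<Rightarrow> 'x" and w y :: "nat \<Rightarrow> 'y" and \<tau> \<sigma> :: "nat \<Rightarrow> real"
    and xb :: 'x and wb yb :: 'y
  assumes f_proper: "proper_fun f" and f_convex: "convex_efun f" and f_lsc: "lsc_efun f"
    and g_proper: "proper_fun g" and g_convex: "convex_efun g" and g_lsc: "lsc_efun g"
    and K_linear: "linear K"
    and h_convex: "convex_on UNIV h"
    and h_grad: "\<And>u. (h has_derivative (\<lambda>d. inner (gradh u) d)) (at u)"
    and L_pos: "L > 0"
    and h_lipschitz: "\<And>u v. norm (gradh u - gradh v) \<le> L * norm (u - v)"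
    and A1: "assumption_A1 f h K g"
    and beta_pos: "\<beta> > 0"
    and psi: "1 < \<psi>" "\<psi> \<le> golden_ratio"
    and mu: "0 < 2 * \<mu>'" "2 * \<mu>' < \<mu>" "\<mu> < \<psi> / 2"
    and tau0: "\<tau>0 > 0" "\<tau> 0 = \<tau>0"
    and z0: "z 0 = x 0"
    and z_upd: "\<And>n. n \<ge> 1 \<Longrightarrow> z n = ((\<psi> - 1) / \<psi>) *\<^sub>R x (n - 1) + (1 / \<psi>) *\<^sub>R z (n - 1)"
    and x_upd: "\<And>n. n \<ge> 1 \<Longrightarrow>
       x n = prox (\<tau> (n - 1)) f (z n - \<tau> (n - 1) *\<^sub>R adjoint K (y (n - 1))
                                    - \<tau> (n - 1) *\<^sub>R gradh (x (n - 1)))"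
    and tau_upd: "\<And>n. n \<ge> 1 \<Longrightarrow>
       \<tau> n = min (\<tau> (n - 1))
               (min (step_term (\<tau> (n - 1)) (\<mu> * norm (x n - x (n - 1)))
                               (sqrt \<beta> * norm (K (x n) - K (x (n - 1)))))
                    (step_term (\<tau> (n - 1)) (\<mu>' * norm (x n - x (n - 1)))
                               (norm (gradh (x n) - gradh (x (n - 1))))))"
    and sigma_upd: "\<And>n. n \<ge> 1 \<Longrightarrow> \<sigma> n = \<beta> * \<tau> n"
    and w_upd: "\<And>n. n \<ge> 1 \<Longrightarrow> w n = prox (1 / \<sigma> n) g ((1 / \<sigma> n) *\<^sub>R y (n - 1) + K (x n))"
    and y_upd: "\<And>n. n \<ge> 1 \<Longrightarrow> y n = y (n - 1) + \<sigma> n *\<^sub>R (K (x n) - w n)"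
    and Omega: "(xb, wb, yb) \<in> Omega_set f gradh K g"
    and b: "b > 0" "b \<ge> 2 * norm yb"
  shows "\<exists>P1 > 0. \<forall>N::nat. N \<ge> 1 \<longrightarrow>
     (let xt = (1 / real N) *\<^sub>R (\<Sum>n = 1..N. x n);
          wt = (1 / real N) *\<^sub>R (\<Sum>n = 1..N. w n);
          \<Phi> = (\<lambda>u v. f u + ereal (h u) + g v)
      in \<bar>\<Phi> xt wt - \<Phi> xb wb\<bar> \<le> ereal (P1 / real N)
         \<and> norm (K xt - wt) \<le> 2 * P1 / (b * real N))"
proof -
  note tau_upd' = tau_upd
  have bK: "bounded_linear K" using K_linear by (simp add: linear_conv_bounded_linear)
  obtain BK where BK: "BK > 0" "\<And>d. norm (K d) \<le> norm d * BK"
    using bounded_linear.pos_bounded[OF bK] by blast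
  have sb: "sqrt \<beta> > 0" using beta_pos by simp
  have phi_lt2: "golden_ratio < 2" unfolding golden_ratio_def
  proof -
    have "sqrt 5 < 3" by (rule real_less_lsqrt) auto
    then show "(1 + sqrt 5) / 2 < 2" by simp
  qed
  have psi2: "\<psi>^2 \<le> \<psi> + 1"
  proof -
    have s5: "sqrt 5 ^ 2 = 5" by simp
    have "(\<psi> - golden_ratio) * (\<psi> - (1 - sqrt 5) / 2) \<le> 0"
    proof (rule mult_nonpos_nonneg)
      show "\<psi> - golden_ratio \<le> 0" using psi by simp
      have "sqrt 5 \<ge> 0" by simp
      then have "(1 - sqrt 5) / 2 \<le> 1 / 2" by (simp add: divide_right_mono)
      then show "0 \<le> \<psi> - (1 - sqrt 5) / 2" using psi(1) by linarith
    qed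
    then show ?thesis unfolding golden_ratio_def using s5 by (simp add: algebra_simps power2_eq_square add_divide_distrib[symmetric])
  qed
  have mu_lt1: "\<mu> < 1" using mu psi phi_lt2 by linarith
  have mup: "\<mu> > 0" "\<mu>' > 0" using mu by auto
  define tmin where "tmin = min \<tau>0 (min (\<mu> / (sqrt \<beta> * BK)) (\<mu>' / L))"
  have tmin_pos: "tmin > 0" unfolding tmin_def using tau0 mup sb BK L_pos by auto
  have tau_ge: "\<tau> n \<ge> tmin" for n
  proof (induction n)
    case 0 then show ?case using tau0 unfolding tmin_def by simp
  next
    case (Suc n)
    have s1: "step_term (\<tau> n) (\<mu> * norm (x (Suc n) - x n)) (sqrt \<beta> * norm (K (x (Suc n)) - K (x n))) \<ge> tmin"
    proof (rule step_term_ge)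
      show "\<tau> n \<ge> tmin" by (rule Suc)
      show "0 \<le> \<mu> * norm (x (Suc n) - x n)" using mup by simp
      show "0 \<le> sqrt \<beta> * norm (K (x (Suc n)) - K (x n))" using sb by simp
      assume ne: "sqrt \<beta> * norm (K (x (Suc n)) - K (x n)) \<noteq> 0"
      have kd: "norm (K (x (Suc n)) - K (x n)) \<le> norm (x (Suc n) - x n) * BK"
        using BK(2)[of "x (Suc n) - x n"] linear_diff[OF K_linear] by simp
      have pos: "norm (K (x (Suc n)) - K (x n)) > 0" using ne by simp
      have "tmin \<le> \<mu> / (sqrt \<beta> * BK)" unfolding tmin_def by simp
      also have "\<mu> / (sqrt \<beta> * BK) \<le> \<mu> * norm (x (Suc n) - x n) / (sqrt \<beta> * norm (K (x (Suc n)) - K (x n)))"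
        using pos kd sb BK mup by (simp add: field_simps mult_left_mono)
      finally show "tmin \<le> \<mu> * norm (x (Suc n) - x n) / (sqrt \<beta> * norm (K (x (Suc n)) - K (x n)))" .
    qed
    have s2: "step_term (\<tau> n) (\<mu>' * norm (x (Suc n) - x n)) (norm (gradh (x (Suc n)) - gradh (x n))) \<ge> tmin"
    proof (rule step_term_ge)
      show "\<tau> n \<ge> tmin" by (rule Suc)
      show "0 \<le> \<mu>' * norm (x (Suc n) - x n)" using mup by simp
      show "0 \<le> norm (gradh (x (Suc n)) - gradh (x n))" by simp
      assume ne: "norm (gradh (x (Suc n)) - gradh (x n)) \<noteq> 0"
      have kd: "norm (gradh (x (Suc n)) - gradh (x n)) \<le> L * norm (x (Suc n) - x n)"
        by (rule h_lipschitz)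
      have "tmin \<le> \<mu>' / L" unfolding tmin_def by simp
      also have "\<mu>' / L \<le> \<mu>' * norm (x (Suc n) - x n) / norm (gradh (x (Suc n)) - gradh (x n))"
        using ne kd L_pos mup by (simp add: field_simps mult_left_mono)
      finally show "tmin \<le> \<mu>' * norm (x (Suc n) - x n) / norm (gradh (x (Suc n)) - gradh (x n))" .
    qed
    show ?case using tau_upd[of "Suc n"] s1 s2 Suc by simp
  qed
  have tau_pos: "\<tau> n > 0" for n using tau_ge[of n] tmin_pos by linarith
  have tau_dec: "\<tau> (Suc n) \<le> \<tau> n" for n using tau_upd[of "Suc n"] by simp
  have ruleK: "sqrt \<beta> * \<tau> (Suc n) * norm (K (x n) - K (x (Suc n))) \<le> \<mu> * norm (x n - x (Suc n))" for n
  proof -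
    have "\<tau> (Suc n) \<le> step_term (\<tau> n) (\<mu> * norm (x (Suc n) - x n)) (sqrt \<beta> * norm (K (x (Suc n)) - K (x n)))"
      using tau_upd[of "Suc n"] by simp
    from step_term_rule[OF this] mup sb
    show ?thesis by (simp add: norm_minus_commute algebra_simps)
  qed
  have ruleH: "\<tau> (Suc n) * norm (gradh (x (Suc n)) - gradh (x n)) \<le> \<mu>' * norm (x (Suc n) - x n)" for n
  proof -
    have "\<tau> (Suc n) \<le> step_term (\<tau> n) (\<mu>' * norm (x (Suc n) - x n)) (norm (gradh (x (Suc n)) - gradh (x n)))"
      using tau_upd[of "Suc n"] by simp
    from step_term_rule[OF this] mup
    show ?thesis by simp
  qed
  have om: "- adjoint K yb - gradh xb \<in> subdiff f xb" "yb \<in> subdiff g wb" "K xb = wb"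
    using Omega unfolding Omega_set_def by auto
  have fin_of_subdiff: "\<exists>r. F z0 = ereal r"
    if vs: "v \<in> subdiff F z0" and pf: "proper_fun F" for F :: "'c::real_inner \<Rightarrow> ereal" and v z0
  proof -
    obtain u where u: "F u \<noteq> \<infinity>" using pf unfolding proper_fun_def by auto
    have "F z0 + ereal (inner v (u - z0)) \<le> F u" using vs unfolding subdiff_def by auto
    then have "F z0 \<noteq> \<infinity>" using u by auto
    moreover have "F z0 \<noteq> -\<infinity>" using pf unfolding proper_fun_def by auto
    ultimately show ?thesis by (cases "F z0") auto
  qed
  obtain Fb where Fb: "f xb = ereal Fb" using fin_of_subdiff[OF om(1) f_proper] by blast
  obtain Gb where Gb: "g wb = ereal Gb" using fin_of_subdiff[OF om(2) g_proper] by blast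
  have saddle: "Fu + h u + Gv - (Fb + h xb + Gb) + inner yb (K u - v) \<ge> 0"
    if "f u = ereal Fu" "g v = ereal Gv" for u v Fu Gv
  proof -
    have a: "f xb + ereal (inner (- adjoint K yb - gradh xb) (u - xb)) \<le> f u"
      using om(1) unfolding subdiff_def by blast
    have b: "g wb + ereal (inner yb (v - wb)) \<le> g v" using om(2) unfolding subdiff_def by blast
    have c: "h u \<ge> h xb + inner (gradh xb) (u - xb)" by (rule h_tangent[OF h_convex h_grad])
    have a': "Fb + inner (- adjoint K yb - gradh xb) (u - xb) \<le> Fu" using a Fb that by simp
    have b': "Gb + inner yb (v - wb) \<le> Gv" using b Gb that by simp
    have adj: "inner (adjoint K yb) (u - xb) = inner yb (K u - wb)"
      using adjoint_works[OF K_linear, of "u - xb" yb] om(3) linear_diff[OF K_linear]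
      by (simp add: inner_commute)
    have "inner (- adjoint K yb - gradh xb) (u - xb) = - inner yb (K u - wb) - inner (gradh xb) (u - xb)"
      using adj by (simp add: inner_diff_left)
    moreover have "inner yb (K u - v) = inner yb (K u - wb) - inner yb (v - wb)"
      by (simp add: inner_diff_right)
    ultimately show ?thesis using a' b' c by linarith
  qed
  define vx where "vx n = z n - \<tau> (n - 1) *\<^sub>R adjoint K (y (n - 1)) - \<tau> (n - 1) *\<^sub>R gradh (x (n - 1))" for n
  have PX: "f (x n) = ereal (real_of_ereal (f (x n)))"
      "\<And>u. f (x n) + ereal (inner ((1 / \<tau> (n - 1)) *\<^sub>R (vx n - x n)) (u - x n)) \<le> f u"
    if "n \<ge> 1" for n
  proof -
    have xe: "x n = prox (\<tau> (n - 1)) f (vx n)" unfolding vx_def using x_upd[OF that] .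
    show "f (x n) = ereal (real_of_ereal (f (x n)))"
      unfolding xe by (rule prox_char(1)[OF f_proper f_convex f_lsc tau_pos])
    show "\<And>u. f (x n) + ereal (inner ((1 / \<tau> (n - 1)) *\<^sub>R (vx n - x n)) (u - x n)) \<le> f u"
      unfolding xe by (rule prox_char(2)[OF f_proper f_convex f_lsc tau_pos])
  qed
  have sig_pos: "\<sigma> n > 0" if "n \<ge> 1" for n using sigma_upd[OF that] beta_pos tau_pos[of n] by simp
  have PW: "g (w n) = ereal (real_of_ereal (g (w n)))"
      "\<And>u. g (w n) + ereal (inner (y n) (u - w n)) \<le> g u"
    if "n \<ge> 1" for n
  proof -
    define vw where "vw = (1 / \<sigma> n) *\<^sub>R y (n - 1) + K (x n)"
    have we: "w n = prox (1 / \<sigma> n) g vw" unfolding vw_def using w_upd[OF that] .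
    have lp: "1 / \<sigma> n > 0" using sig_pos[OF that] by simp
    show "g (w n) = ereal (real_of_ereal (g (w n)))"
      unfolding we by (rule prox_char(1)[OF g_proper g_convex g_lsc lp])
    have yy: "(1 / (1 / \<sigma> n)) *\<^sub>R (vw - w n) = y n"
      unfolding vw_def y_upd[OF that] using sig_pos[OF that] by (simp add: algebra_simps)
    show "\<And>u. g (w n) + ereal (inner (y n) (u - w n)) \<le> g u"
      using prox_char(2)[OF g_proper g_convex g_lsc lp, of vw] unfolding we[symmetric] yy .
  qed
  define F where "F n = real_of_ereal (f (x n))" for n
  define G where "G n = real_of_ereal (g (w n))" for n
  have Fe: "f (x n) = ereal (F n)" if "n \<ge> 1" for n using PX(1)[OF that] unfolding F_def .
  have Ge: "g (w n) = ereal (G n)" if "n \<ge> 1" for n using PW(1)[OF that] unfolding G_def .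
  define \<Delta> where "\<Delta> n = F n + h (x n) + G n - (Fb + h xb + Gb) + inner yb (K (x n) - w n)" for n
  have Delta_nonneg: "\<Delta> n \<ge> 0" if "n \<ge> 1" for n
    unfolding \<Delta>_def by (rule saddle[OF Fe[OF that] Ge[OF that]])
  have adjK: "inner (adjoint K yy) (a - c) = inner yy (K a - K c)" for yy a c
    using adjoint_works[OF K_linear, of "a - c" yy] linear_diff[OF K_linear, of a c]
    by (simp add: inner_commute)
  define A where "A = \<psi> / (\<psi> - 1)"
  define W where "W n = A * norm (z (Suc n) - xb)^2 + (1/\<beta>) * norm (yb - y (n - 1))^2
                        + \<mu>' * norm (x n - x (n - 1))^2" for n
  have W_nonneg: "W n \<ge> 0" for n
  proof -
    have "A > 0" unfolding A_def using psi by simp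
    then show ?thesis unfolding W_def using beta_pos mup by simp
  qed
  have zrel: "z m - x m = \<psi> *\<^sub>R (z (Suc m) - x m)" for m
  proof -
    have "z (Suc m) = ((\<psi> - 1) / \<psi>) *\<^sub>R x m + (1 / \<psi>) *\<^sub>R z m" using z_upd[of "Suc m"] by simp
    then have e1: "\<psi> *\<^sub>R z (Suc m) = (\<psi> * ((\<psi> - 1) / \<psi>)) *\<^sub>R x m + (\<psi> * (1 / \<psi>)) *\<^sub>R z m"
      by (simp add: scaleR_add_right)
    have e2: "\<psi> * ((\<psi> - 1) / \<psi>) = \<psi> - 1" "\<psi> * (1 / \<psi>) = 1" using psi by auto
    from e1 have "\<psi> *\<^sub>R z (Suc m) = (\<psi> - 1) *\<^sub>R x m + z m" unfolding e2 by simp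
    then show ?thesis by (simp add: algebra_simps)
  qed
  have step: "2 * \<tau> (Suc m) * \<Delta> (Suc m) \<le> W (Suc m) - W (Suc (Suc m))
       + (1/\<beta>) * ((\<tau> (Suc m) / \<tau> (Suc (Suc m))) * \<mu> - 1) * norm (y (Suc m) - y m)^2
       - ((\<tau> (Suc m) / \<tau> m) * \<psi> - (\<tau> (Suc m) / \<tau> (Suc (Suc m))) * \<mu> - 2 * \<mu>') * norm (x (Suc (Suc m)) - x (Suc m))^2"
    for m
  proof -
    have ha: "F (Suc (Suc m)) - Fb \<le> (1 / \<tau> (Suc m)) * inner (z (Suc (Suc m)) - x (Suc (Suc m))) (x (Suc (Suc m)) - xb)
        + inner (y (Suc m)) (K xb - K (x (Suc (Suc m)))) + inner (gradh (x (Suc m))) (xb - x (Suc (Suc m)))"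
    proof -
      have "f (x (Suc (Suc m))) + ereal (inner ((1 / \<tau> (Suc m)) *\<^sub>R (vx (Suc (Suc m)) - x (Suc (Suc m)))) (xb - x (Suc (Suc m)))) \<le> f xb"
        using PX(2)[of "Suc (Suc m)"] by simp
      then have "ereal (F (Suc (Suc m))) + ereal (inner ((1 / \<tau> (Suc m)) *\<^sub>R (z (Suc (Suc m)) - \<tau> (Suc m) *\<^sub>R adjoint K (y (Suc m)) - \<tau> (Suc m) *\<^sub>R gradh (x (Suc m)) - x (Suc (Suc m)))) (xb - x (Suc (Suc m)))) \<le> ereal Fb"
        using Fe[of "Suc (Suc m)"] Fb unfolding vx_def by simp
      from prox_step_ineq[OF this tau_pos] show ?thesis using adjK by simp
    qed
    have hb: "F (Suc m) - F (Suc (Suc m)) \<le> (\<psi> / \<tau> m) * inner (z (Suc (Suc m)) - x (Suc m)) (x (Suc m) - x (Suc (Suc m)))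
        + inner (y m) (K (x (Suc (Suc m))) - K (x (Suc m))) + inner (gradh (x m)) (x (Suc (Suc m)) - x (Suc m))"
    proof -
      have "f (x (Suc m)) + ereal (inner ((1 / \<tau> m) *\<^sub>R (vx (Suc m) - x (Suc m))) (x (Suc (Suc m)) - x (Suc m))) \<le> f (x (Suc (Suc m)))"
        using PX(2)[of "Suc m"] by simp
      then have "ereal (F (Suc m)) + ereal (inner ((1 / \<tau> m) *\<^sub>R (z (Suc m) - \<tau> m *\<^sub>R adjoint K (y m) - \<tau> m *\<^sub>R gradh (x m) - x (Suc m))) (x (Suc (Suc m)) - x (Suc m))) \<le> ereal (F (Suc (Suc m)))"
        using Fe[of "Suc (Suc m)"] Fe[of "Suc m"] unfolding vx_def by simp
      from prox_step_ineq[OF this tau_pos] show ?thesis using adjK unfolding zrel[of "Suc m"] by simp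
    qed
    have hg: "G (Suc m) - Gb \<le> inner (y (Suc m)) (w (Suc m) - K xb)"
    proof -
      have "g (w (Suc m)) + ereal (inner (y (Suc m)) (wb - w (Suc m))) \<le> g wb" using PW(2)[of "Suc m"] by simp
      then have "G (Suc m) + inner (y (Suc m)) (wb - w (Suc m)) \<le> Gb" using Ge[of "Suc m"] Gb by simp
      then show ?thesis using om(3) by (simp add: inner_diff_right)
    qed
    have hh: "h (x (Suc m)) - h xb \<le> inner (gradh (x (Suc m))) (x (Suc m) - xb)"
      using h_tangent[OF h_convex h_grad, of "x (Suc m)" xb] by (simp add: inner_diff_right)
    have hy: "y (Suc m) = y m + (\<beta> * \<tau> (Suc m)) *\<^sub>R (K (x (Suc m)) - w (Suc m))"
      using y_upd[of "Suc m"] sigma_upd[of "Suc m"] by simp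
    have hz: "z (Suc (Suc (Suc m))) = ((\<psi> - 1) / \<psi>) *\<^sub>R x (Suc (Suc m)) + (1 / \<psi>) *\<^sub>R z (Suc (Suc m))"
      using z_upd[of "Suc (Suc (Suc m))"] by simp
    have hH: "\<tau> (Suc m) * norm (gradh (x (Suc m)) - gradh (x m)) \<le> \<mu>' * norm (x (Suc m) - x m)"
      by (rule ruleH)
    note os = one_step[OF ha hb hg hh hy hz ruleK[of "Suc m"] hH tau_pos tau_pos tau_pos tau_dec beta_pos psi(1) psi2
        less_imp_le[OF mup(1)] less_imp_le[OF mup(2)], of yb]
    show ?thesis using os om(3) unfolding W_def \<Delta>_def A_def by (simp add: algebra_simps)
  qed
  have decseq_tau: "decseq \<tau>" using tau_dec by (simp add: decseq_Suc_iff)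
  obtain tl where tl: "\<tau> \<longlonglongrightarrow> tl" "\<forall>i. tl \<le> \<tau> i"
    using decseq_convergent[OF decseq_tau, of tmin] tau_ge by blast
  have tl_pos: "tl > 0"
  proof -
    have "tl \<ge> tmin" using LIMSEQ_le_const[OF tl(1), of tmin] tau_ge by auto
    then show ?thesis using tmin_pos by simp
  qed
  have r1: "(\<lambda>m. \<tau> (Suc m) / \<tau> m) \<longlonglongrightarrow> 1"
    using tendsto_divide[OF LIMSEQ_Suc[OF tl(1)] tl(1)] tl_pos by simp
  have r2: "(\<lambda>m. \<tau> (Suc m) / \<tau> (Suc (Suc m))) \<longlonglongrightarrow> 1"
    using tendsto_divide[OF LIMSEQ_Suc[OF tl(1)] LIMSEQ_Suc[OF LIMSEQ_Suc[OF tl(1)]]] tl_pos by simp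
  have l1: "(\<lambda>m. (\<tau> (Suc m) / \<tau> (Suc (Suc m))) * \<mu>) \<longlonglongrightarrow> 1 * \<mu>"
    by (intro tendsto_intros r2)
  have l2: "(\<lambda>m. (\<tau> (Suc m) / \<tau> m) * \<psi> - (\<tau> (Suc m) / \<tau> (Suc (Suc m))) * \<mu> - 2 * \<mu>')
      \<longlonglongrightarrow> 1 * \<psi> - 1 * \<mu> - 2 * \<mu>'"
    by (intro tendsto_intros r1 r2)
  have ev1: "eventually (\<lambda>m. (\<tau> (Suc m) / \<tau> (Suc (Suc m))) * \<mu> < 1) sequentially"
    using order_tendstoD(2)[OF l1] mu_lt1 by simp
  have ev2: "eventually (\<lambda>m. (\<tau> (Suc m) / \<tau> m) * \<psi> - (\<tau> (Suc m) / \<tau> (Suc (Suc m))) * \<mu> - 2 * \<mu>' > 0) sequentially"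
  proof -
    have "0 < 1 * \<psi> - 1 * \<mu> - 2 * \<mu>'" using mu by simp
    from order_tendstoD(1)[OF l2 this] show ?thesis by simp
  qed
  obtain M where M: "\<And>m. m \<ge> M \<Longrightarrow> (\<tau> (Suc m) / \<tau> (Suc (Suc m))) * \<mu> < 1 \<and>
      (\<tau> (Suc m) / \<tau> m) * \<psi> - (\<tau> (Suc m) / \<tau> (Suc (Suc m))) * \<mu> - 2 * \<mu>' > 0"
    using eventually_conj[OF ev1 ev2] unfolding eventually_sequentially by blast
  have step2: "2 * \<tau> (Suc m) * \<Delta> (Suc m) \<le> W (Suc m) - W (Suc (Suc m))" if "m \<ge> M" for m
  proof -
    have a: "(1/\<beta>) * ((\<tau> (Suc m) / \<tau> (Suc (Suc m))) * \<mu> - 1) * norm (y (Suc m) - y m)^2 \<le> 0"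
    proof (rule mult_nonpos_nonneg)
      show "(1/\<beta>) * ((\<tau> (Suc m) / \<tau> (Suc (Suc m))) * \<mu> - 1) \<le> 0"
        using M[OF that] beta_pos by (intro mult_nonneg_nonpos) auto
    qed simp
    have b: "((\<tau> (Suc m) / \<tau> m) * \<psi> - (\<tau> (Suc m) / \<tau> (Suc (Suc m))) * \<mu> - 2 * \<mu>') * norm (x (Suc (Suc m)) - x (Suc m))^2 \<ge> 0"
      using M[OF that] by simp
    show ?thesis using step[of m] a b by linarith
  qed
  define E0 where "E0 = 2 * tmin * (\<Sum>n = 1..M. \<Delta> n) + W (Suc M)"
  have lyap: "2 * tmin * (\<Sum>n = 1..N. \<Delta> n) + W (Suc N) \<le> E0" if "N \<ge> M" for N
    using that
  proof (induction N rule: dec_induct)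
    case base then show ?case unfolding E0_def by simp
  next
    case (step N)
    have "2 * tmin * \<Delta> (Suc N) \<le> 2 * \<tau> (Suc N) * \<Delta> (Suc N)"
      using tau_ge[of "Suc N"] Delta_nonneg[of "Suc N"] by (intro mult_right_mono) auto
    also have "\<dots> \<le> W (Suc N) - W (Suc (Suc N))" using step2[OF step(1)] .
    finally show ?case using step(3) by (simp add: algebra_simps)
  qed
  have sum_nonneg: "(\<Sum>n = 1..N. \<Delta> n) \<ge> 0" for N using Delta_nonneg by (intro sum_nonneg) auto
  have E0_nonneg: "E0 \<ge> 0" unfolding E0_def using sum_nonneg[of M] W_nonneg[of "Suc M"] tmin_pos by simp
  have sumD: "2 * tmin * (\<Sum>n = 1..N. \<Delta> n) \<le> E0" for N
  proof (cases "N \<ge> M")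
    case True then show ?thesis using lyap[OF True] W_nonneg[of "Suc N"] by linarith
  next
    case False
    have "(\<Sum>n = 1..N. \<Delta> n) \<le> (\<Sum>n = 1..M. \<Delta> n)"
      using False Delta_nonneg by (intro sum_mono2) auto
    then show ?thesis unfolding E0_def using W_nonneg[of "Suc M"] tmin_pos
      by (smt (verit) mult_left_mono)
  qed
  define My where "My = Max (norm ` y ` {..M}) + norm yb + sqrt (\<beta> * E0)"
  have y_bound: "norm (y n) \<le> My" for n
  proof (cases "n \<le> M")
    case True
    then have "norm (y n) \<le> Max (norm ` y ` {..M})" by (intro Max_ge) auto
    moreover have "sqrt (\<beta> * E0) \<ge> 0" using beta_pos E0_nonneg by simp
    ultimately show ?thesis unfolding My_def using norm_ge_zero[of yb] by linarith
  next
    case False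
    have A0: "A \<ge> 0" unfolding A_def using psi by simp
    have w1: "(1/\<beta>) * norm (yb - y n)^2 \<le> W (Suc n)" unfolding W_def using mup A0
      by (simp add: add_nonneg_nonneg)
    have "2 * tmin * (\<Sum>n = 1..n. \<Delta> n) \<ge> 0" using sum_nonneg[of n] tmin_pos by simp
    then have "W (Suc n) \<le> E0" using lyap[of n] False by linarith
    with w1 have "(1/\<beta>) * norm (yb - y n)^2 \<le> E0" by linarith
    then have "norm (yb - y n)^2 \<le> \<beta> * E0" using beta_pos by (simp add: field_simps)
    then have "norm (yb - y n) \<le> sqrt (\<beta> * E0)" by (simp add: real_le_rsqrt)
    moreover have "norm (y n) \<le> norm yb + norm (yb - y n)" by (metis norm_triangle_sub norm_minus_commute add.commute)
    moreover have "0 \<le> Max (norm ` y ` {..M})"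
      by (rule order_trans[OF norm_ge_zero Max_ge[of _ "norm (y 0)"]]) auto
    ultimately show ?thesis unfolding My_def by linarith
  qed
  define Sf where "Sf N = (\<Sum>n = 1..N. K (x n) - w n)" for N
  have kw_eq: "K (x n) - w n = (1 / \<sigma> n) *\<^sub>R (y n - y (n - 1))" if "n \<ge> 1" for n
    using y_upd[OF that] sig_pos[OF that] by simp
  have sig_dec: "\<sigma> (Suc n) \<le> \<sigma> n" if "n \<ge> 1" for n
    using sigma_upd[OF that] sigma_upd[of "Suc n"] tau_dec[of n] beta_pos that by simp
  have Sf_aux: "norm (Sf N - (1 / \<sigma> N) *\<^sub>R y N) \<le> My / \<sigma> N" if "N \<ge> 1" for N
    using that
  proof (induction N rule: dec_induct)
    case base
    have "Sf 1 - (1 / \<sigma> 1) *\<^sub>R y 1 = - ((1 / \<sigma> 1) *\<^sub>R y 0)"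
      unfolding Sf_def using kw_eq[of 1] by (simp add: algebra_simps)
    then show ?case using y_bound[of 0] sig_pos[of 1] by (simp add: divide_right_mono)
  next
    case (step N)
    have e: "Sf (Suc N) - (1 / \<sigma> (Suc N)) *\<^sub>R y (Suc N)
        = (Sf N - (1 / \<sigma> N) *\<^sub>R y N) + (1 / \<sigma> N - 1 / \<sigma> (Suc N)) *\<^sub>R y N"
      unfolding Sf_def using kw_eq[of "Suc N"] step(1)
      by (simp add: algebra_simps)
    have c: "1 / \<sigma> N \<le> 1 / \<sigma> (Suc N)"
      using sig_dec[OF step(1)] sig_pos[OF step(1)] sig_pos[of "Suc N"]
      by (intro divide_left_mono) auto
    have "norm ((1 / \<sigma> N - 1 / \<sigma> (Suc N)) *\<^sub>R y N) \<le> (1 / \<sigma> (Suc N) - 1 / \<sigma> N) * My"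
      using c y_bound[of N] by (simp add: mult_left_mono)
    then have "norm (Sf (Suc N) - (1 / \<sigma> (Suc N)) *\<^sub>R y (Suc N)) \<le> My / \<sigma> N + (1 / \<sigma> (Suc N) - 1 / \<sigma> N) * My"
      unfolding e using step(3) norm_triangle_ineq[of "Sf N - (1 / \<sigma> N) *\<^sub>R y N" "(1 / \<sigma> N - 1 / \<sigma> (Suc N)) *\<^sub>R y N"]
        by linarith
    also have "\<dots> = My / \<sigma> (Suc N)" by (simp add: algebra_simps)
    finally show ?case .
  qed
  define c2 where "c2 = 2 * My / (\<beta> * tmin)"
  have My0: "My \<ge> 0" using y_bound[of 0] norm_ge_zero[of "y 0"] by linarith
  have Sf_bound: "norm (Sf N) \<le> c2" if "N \<ge> 1" for N
  proof -
    have "norm (Sf N) \<le> norm (Sf N - (1 / \<sigma> N) *\<^sub>R y N) + norm ((1 / \<sigma> N) *\<^sub>R y N)"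
      by (metis norm_triangle_sub add.commute)
    also have "norm ((1 / \<sigma> N) *\<^sub>R y N) \<le> My / \<sigma> N"
      using y_bound[of N] sig_pos[OF that] by (simp add: divide_right_mono)
    finally have "norm (Sf N) \<le> 2 * My / \<sigma> N" using Sf_aux[OF that] by simp
    also have "\<dots> \<le> 2 * My / (\<beta> * tmin)"
      using sigma_upd[OF that] tau_ge[of N] beta_pos tmin_pos My0
      by (intro divide_left_mono) (auto intro: mult_left_mono)
    finally show ?thesis unfolding c2_def .
  qed
  have c2_0: "c2 \<ge> 0" unfolding c2_def using My0 beta_pos tmin_pos by simp
  define P1 where "P1 = E0 / (2 * tmin) + norm yb * c2 + b * c2 / 2 + 1"
  have nn: "E0 / (2 * tmin) \<ge> 0" "norm yb * c2 \<ge> 0" "b * c2 / 2 \<ge> 0"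
    using E0_nonneg tmin_pos c2_0 b by auto
  have P1_pos: "P1 > 0" unfolding P1_def using nn by linarith
  show ?thesis
  proof (intro exI[of _ P1] conjI P1_pos allI impI)
    fix N :: nat assume N1: "N \<ge> 1"
    define xt where "xt = (1 / real N) *\<^sub>R (\<Sum>n = 1..N. x n)"
    define wt where "wt = (1 / real N) *\<^sub>R (\<Sum>n = 1..N. w n)"
    have Np: "real N > 0" using N1 by simp
    have cardN: "card {1..N} = N" by simp
    have ne: "{1..N} \<noteq> {}" using N1 by simp
    have jf: "f xt \<le> ereal ((1 / real N) * (\<Sum>n = 1..N. F n))"
      using efun_jensen[OF f_convex finite_atLeastAtMost ne, of x F] Fe unfolding xt_def cardN by simp
    have jg: "g wt \<le> ereal ((1 / real N) * (\<Sum>n = 1..N. G n))"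
      using efun_jensen[OF g_convex finite_atLeastAtMost ne, of w G] Ge unfolding wt_def cardN by simp
    have jh: "h xt \<le> (1 / real N) * (\<Sum>n = 1..N. h (x n))"
    proof -
      have "h (\<Sum>n = 1..N. (1 / real N) *\<^sub>R x n) \<le> (\<Sum>n = 1..N. (1 / real N) * h (x n))"
        using Np by (intro convex_on_sum[OF finite_atLeastAtMost ne h_convex]) auto
      then show ?thesis unfolding xt_def by (simp add: scaleR_sum_right sum_distrib_left)
    qed
    obtain Fx where Fx: "f xt = ereal Fx"
    proof -
      have "f xt \<noteq> \<infinity>" using jf by auto
      moreover have "f xt \<noteq> -\<infinity>" using f_proper unfolding proper_fun_def by auto
      ultimately show ?thesis using that by (cases "f xt") auto
    qed
    obtain Gw where Gw: "g wt = ereal Gw"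
    proof -
      have "g wt \<noteq> \<infinity>" using jg by auto
      moreover have "g wt \<noteq> -\<infinity>" using g_proper unfolding proper_fun_def by auto
      ultimately show ?thesis using that by (cases "g wt") auto
    qed
    have KS: "K xt - wt = (1 / real N) *\<^sub>R Sf N"
      unfolding xt_def wt_def Sf_def using K_linear
      by (simp add: linear_scale linear_sum sum_subtractf scaleR_diff_right)
    have nKS: "norm (K xt - wt) \<le> c2 / real N"
      unfolding KS using Sf_bound[OF N1] Np by (simp add: divide_right_mono)
    define D where "D = Fx + h xt + Gw - (Fb + h xb + Gb)"
    have up: "D \<le> (E0 / (2 * tmin) + norm yb * c2) / real N"
    proof -
      have "Fx \<le> (1 / real N) * (\<Sum>n = 1..N. F n)" using jf Fx by simp
      moreover have "Gw \<le> (1 / real N) * (\<Sum>n = 1..N. G n)" using jg Gw by simp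
      ultimately have "D \<le> (1 / real N) * ((\<Sum>n = 1..N. F n) + (\<Sum>n = 1..N. h (x n)) + (\<Sum>n = 1..N. G n))
           - (Fb + h xb + Gb)"
        unfolding D_def using jh by (simp add: algebra_simps)
      also have "\<dots> = (1 / real N) * ((\<Sum>n = 1..N. \<Delta> n) - inner yb (Sf N))"
      proof -
        have "(\<Sum>n = 1..N. \<Delta> n) = (\<Sum>n = 1..N. F n) + (\<Sum>n = 1..N. h (x n)) + (\<Sum>n = 1..N. G n)
            - real N * (Fb + h xb + Gb) + inner yb (Sf N)"
        proof -
          have i: "inner yb (Sf N) = (\<Sum>n = 1..N. inner yb (K (x n) - w n))"
            unfolding Sf_def by (rule inner_sum_right)
          show ?thesis unfolding i \<Delta>_def by (simp add: sum.distrib sum_subtractf)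
        qed
        then show ?thesis using Np by (simp add: field_simps)
      qed
      also have "\<dots> \<le> (1 / real N) * (E0 / (2 * tmin) + norm yb * c2)"
      proof -
        have "(\<Sum>n = 1..N. \<Delta> n) \<le> E0 / (2 * tmin)" using sumD[of N] tmin_pos by (simp add: field_simps)
        moreover have "- inner yb (Sf N) \<le> norm yb * c2"
          using Cauchy_Schwarz_ineq2[of yb "Sf N"] Sf_bound[OF N1]
          by (smt (verit) mult_left_mono norm_ge_zero)
        ultimately show ?thesis using Np by (intro mult_left_mono) auto
      qed
      finally show ?thesis by simp
    qed
    have low: "D \<ge> - (norm yb * c2) / real N"
    proof -
      have "D + inner yb (K xt - wt) \<ge> 0" unfolding D_def using saddle[OF Fx Gw] by simp
      moreover have "inner yb (K xt - wt) \<le> norm yb * (c2 / real N)"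
        using Cauchy_Schwarz_ineq2[of yb "K xt - wt"] nKS
        by (smt (verit) mult_left_mono norm_ge_zero)
      ultimately show ?thesis by simp
    qed
    have absD: "\<bar>D\<bar> \<le> P1 / real N"
    proof -
      have "(E0 / (2 * tmin) + norm yb * c2) \<le> P1" "norm yb * c2 \<le> P1"
        unfolding P1_def using nn by linarith+
      then have "(E0 / (2 * tmin) + norm yb * c2) / real N \<le> P1 / real N" "norm yb * c2 / real N \<le> P1 / real N"
        using Np by (auto intro: divide_right_mono)
      then show ?thesis using up low by (simp add: abs_le_iff)
    qed
    have Phi_eq: "(f xt + ereal (h xt) + g wt) - (f xb + ereal (h xb) + g wb) = ereal D"
      unfolding D_def using Fx Gw Fb Gb by simp
    have n2: "norm (K xt - wt) \<le> 2 * P1 / (b * real N)"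
    proof -
      have "c2 \<le> 2 * P1 / b" unfolding P1_def using b E0_nonneg tmin_pos c2_0 by (simp add: field_simps)
      then have "c2 / real N \<le> (2 * P1 / b) / real N" using Np by (intro divide_right_mono) auto
      also have "(2 * P1 / b) / real N = 2 * P1 / (b * real N)" by simp
      finally show ?thesis using nKS by linarith
    qed
    show "let xt = (1 / real N) *\<^sub>R (\<Sum>n = 1..N. x n);
          wt = (1 / real N) *\<^sub>R (\<Sum>n = 1..N. w n);
          \<Phi> = (\<lambda>u v. f u + ereal (h u) + g v)
      in \<bar>\<Phi> xt wt - \<Phi> xb wb\<bar> \<le> ereal (P1 / real N)
         \<and> norm (K xt - wt) \<le> 2 * P1 / (b * real N)"
      unfolding Let_def xt_def[symmetric] wt_def[symmetric] Phi_eq using absD n2 by simp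
  qed
qed

end
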